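(* Consider $M$ base stations $\mathcal{M}=\{1,\dots,M\}$ and $N$ test points $\mathcal{N}=\{1,\dots,N\}$, with data demands $d_j>0$ ($j\in\mathcal{N}$), an assignment matrix $X=(x_{i,j})\in\{0,1\}^{M\times N}$ such that every base station $i$ has at least one $j$ with $x_{i,j}=1$, power gains $g_{i,j}\ge 0$ with $g_{i,j}>0$ whenever $x_{i,j}=1$, transmit power spectral densities $P_i>0$, noise power $\sigma^2>0$, and constants $K>0$, $B>0$, $\eta>0$. For $\boldsymbol{\rho}=(\rho_1,\dots,\rho_M)\in\mathbb{R}_+^M$ define $$\omega_{i,j}(\boldsymbol{\rho})=B\log_2\!\left(1+\frac{P_i g_{i,j}}{\eta\left(\sum_{l\in\mathcal{M}\setminus\{i\}}P_l g_{l,j}\rho_l+\sigma^2\right)}\right),\qquad I_i(\boldsymbol{\rho})=\sum_{j\in\mathcal{N}:\,x_{i,j}=1}\frac{d_j}{K\,\omega_{i,j}(\boldsymbol{\rho})}.$$ Then each $I_i:\mathbb{R}_+^M\to\mathbb{R}_{++}$ is concave, and hence a standard interference function; consequently $\mathcal{J}(\boldsymbol{\rho})=[I_1(\boldsymbol{\rho}),\dots,I_M(\boldsymbol{\rho})]^T$ is a standard interference mapping.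
   Context: $\mathbb{R}_+$ denotes the nonnegative reals and $\mathbb{R}_{++}$ the strictly positive reals; vector inequalities are componentwise. A function $I:\mathbb{R}_+^M\to\mathbb{R}_{++}$ is called a standard interference function if it satisfies scalability ($\alpha I(\mathbf{x})>I(\alpha\mathbf{x})$ for all $\mathbf{x}\in\mathbb{R}_+^M$, $\alpha>1$) and monotonicity ($I(\mathbf{x}_1)\ge I(\mathbf{x}_2)$ whenever $\mathbf{x}_1\ge\mathbf{x}_2$). Given standard interference functions $I_1,\dots,I_M$, the mapping $\mathbf{x}\mapsto[I_1(\mathbf{x}),\dots,I_M(\mathbf{x})]^T$ is called a standard interference mapping. *)

theory Defs
  imports "HOL-Analysis.Analysis"
begin

text \<open>Base stations are indexed by a finite type 'm, test points by a finite type 'n.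
  Vectors in R^M are elements of real^'m.\<close>

definition nonneg_orthant :: "(real^'m) set" where
  "nonneg_orthant = {x. \<forall>k. 0 \<le> x $ k}"

definition standard_interference_function :: "(real^'m \<Rightarrow> real) \<Rightarrow> bool" where
  "standard_interference_function I \<longleftrightarrow>
     (\<forall>x\<in>nonneg_orthant. I x > 0) \<and>
     (\<forall>x\<in>nonneg_orthant. \<forall>\<alpha>::real. \<alpha> > 1 \<longrightarrow> \<alpha> * I x > I (\<alpha> *\<^sub>R x)) \<and>
     (\<forall>x1\<in>nonneg_orthant. \<forall>x2\<in>nonneg_orthant.
        (\<forall>k. x2 $ k \<le> x1 $ k) \<longrightarrow> I x1 \<ge> I x2)"

definition standard_interference_mapping :: "(real^'m \<Rightarrow> real^'m) \<Rightarrow> bool" where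
  "standard_interference_mapping J \<longleftrightarrow>
     (\<forall>i. standard_interference_function (\<lambda>x. J x $ i))"

definition omega ::
  "real \<Rightarrow> ('m \<Rightarrow> real) \<Rightarrow> ('m \<Rightarrow> 'n \<Rightarrow> real) \<Rightarrow> real \<Rightarrow> real
     \<Rightarrow> 'm::finite \<Rightarrow> 'n \<Rightarrow> real^'m \<Rightarrow> real" where
  "omega B P g \<eta> \<sigma>2 i j \<rho> =
     B * log 2 (1 + P i * g i j /
        (\<eta> * ((\<Sum>l\<in>UNIV - {i}. P l * g l j * \<rho> $ l) + \<sigma>2)))"

text \<open>Load function I_i(rho); the assignment matrix x is given as a boolean
  matrix (x i j \<longleftrightarrow> x_{i,j} = 1).\<close>
definition load_fun ::
  "('n::finite \<Rightarrow> real) \<Rightarrow> ('m::finite \<Rightarrow> 'n \<Rightarrow> bool) \<Rightarrow> real \<Rightarrow> real \<Rightarrow> ('m \<Rightarrow> real)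
     \<Rightarrow> ('m \<Rightarrow> 'n \<Rightarrow> real) \<Rightarrow> real \<Rightarrow> real \<Rightarrow> 'm \<Rightarrow> real^'m \<Rightarrow> real" where
  "load_fun d x K B P g \<eta> \<sigma>2 i \<rho> =
     (\<Sum>j\<in>{j. x i j}. d j / (K * omega B P g \<eta> \<sigma>2 i j \<rho>))"

end

theory Submission imports Defs begin
lemma ln_ineq:
  fixes u :: real assumes "u \<ge> 0" shows "2*u/(2+u) \<le> ln(1+u)"
proof -
  have "(\<lambda>u. ln(1+u) - 2*u/(2+u)) 0 \<le> (\<lambda>u. ln(1+u) - 2*u/(2+u)) u"
  proof (rule DERIV_nonneg_imp_nondecreasing[OF assms])
    fix y :: real assume y: "0 \<le> y" "y \<le> u"
    have "((\<lambda>u. ln(1+u) - 2*u/(2+u)) has_real_derivative (1/(1+y) - 4/(2+y)^2)) (at y)"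
      using y by (auto intro!: derivative_eq_intros simp: field_simps power2_eq_square)
    moreover have "1/(1+y) - 4/(2+y)^2 \<ge> 0"
      using y apply (simp add: field_simps power2_eq_square divide_le_eq_1)
      by (smt (verit) mult_nonneg_nonneg)
    ultimately show "\<exists>z. ((\<lambda>u. ln(1+u) - 2*u/(2+u)) has_real_derivative z) (at y) \<and> 0 \<le> z" by blast
  qed
  then show ?thesis by simp
qed
lemma h_concave:
  fixes c :: real assumes c: "c > 0"
  shows "concave_on {0<..} (\<lambda>t. 1 / (ln (t+c) - ln t))"
proof -
  define L where "L t = ln (t+c) - ln t" for t
  define q where "q t = t*(t+c)*(L t)^2" for t
  define q' where "q' t = (2*t+c)*(L t)^2 + t*(t+c)*(2*L t*(1/(t+c) - 1/t))" for t
  have Lpos: "L t > 0" if "t > 0" for t using that c by (simp add: L_def)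
  have qpos: "q t > 0" if "t > 0" for t using that c Lpos[OF that] by (simp add: q_def)
  have dL: "(L has_real_derivative (1/(t+c) - 1/t)) (at t)" if "t > 0" for t
    unfolding L_def[abs_def] using that c by (auto intro!: derivative_eq_intros)
  have dq: "(q has_real_derivative q' t) (at t)" if "t > 0" for t
    unfolding q_def[abs_def] q'_def
    by (rule derivative_eq_intros dL[OF that] refl)+ (simp add: algebra_simps power2_eq_square)
  have q'eq: "q' t = (2*t+c)*(L t)^2 - 2*c*L t" if "t > 0" for t
  proof -
    have "t*(t+c)*(1/(t+c) - 1/t) = t*(t+c)/(t+c) - t*(t+c)/t" by (simp add: right_diff_distrib)
    also have "\<dots> = t - (t+c)" using that c by simp
    finally have "t*(t+c)*(1/(t+c) - 1/t) = -c" by simp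
    then have "t*(t+c)*(2*L t*(1/(t+c) - 1/t)) = -2*c*L t" by (metis mult.commute mult.left_commute mult_minus_left)
    then show ?thesis unfolding q'_def by simp
  qed
  show ?thesis
  proof (rule f''_le0_imp_concave[where f' = "\<lambda>t. c / q t" and f'' = "\<lambda>t. - c * q' t / (q t)^2"])
    show "convex {0::real<..}" by simp
  next
    fix t :: real assume t: "t \<in> {0<..}"
    hence t0: "t > 0" by simp
    have "((\<lambda>t. 1 / L t) has_real_derivative (- (1/(t+c) - 1/t) / (L t)^2)) (at t)"
      using Lpos[OF t0] by (auto intro!: derivative_eq_intros dL[OF t0] simp: power2_eq_square field_simps)
    moreover have "- (1/(t+c) - 1/t) / (L t)^2 = c / q t"
      using t0 c Lpos[OF t0] by (simp add: q_def field_simps power2_eq_square)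
    ultimately show "((\<lambda>t. 1 / (ln (t+c) - ln t)) has_real_derivative c / q t) (at t)"
      by (simp add: L_def)
    have "((\<lambda>t. c / q t) has_real_derivative (- c * q' t / (q t)^2)) (at t)"
      using qpos[OF t0] by (auto intro!: derivative_eq_intros dq[OF t0] simp: power2_eq_square field_simps)
    then show "((\<lambda>t. c / q t) has_real_derivative (- c * q' t / (q t)^2)) (at t)" .
    have "2*(c/t)/(2+c/t) \<le> ln (1 + c/t)" using t0 c by (intro ln_ineq) auto
    also have "1 + c/t = (t+c)/t" using t0 by (simp add: field_simps)
    also have "ln ((t+c)/t) = L t" using t0 c by (simp add: L_def ln_div)
    finally have "2*c \<le> (2*t+c)*L t" using t0 c by (simp add: field_simps)
    then have "2*c*L t \<le> (2*t+c)*L t * L t"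
      using Lpos[OF t0] by (intro mult_right_mono) auto
    then have "0 \<le> q' t" using q'eq[OF t0] by (simp add: power2_eq_square algebra_simps)
    then show "- c * q' t / (q t)^2 \<le> 0"
      using c by (simp add: divide_nonpos_nonneg)
  qed
qed

lemma concave_on_eq:
  assumes "concave_on S f" "\<And>x. x \<in> S \<Longrightarrow> f x = g x"
  shows "concave_on S g"
  using assms by (auto simp: concave_on_iff convex_def)

lemma hh_concave:
  fixes c :: real assumes c: "c > 0"
  shows "concave_on {0<..} (\<lambda>t. 1 / ln (1 + c/t))"
proof (rule concave_on_eq[OF h_concave[OF c]])
  fix t :: real assume "t \<in> {0<..}"
  hence t0: "t > 0" by simp
  have "1 + c/t = (t+c)/t" using t0 by (simp add: field_simps)
  then show "1 / (ln (t+c) - ln t) = 1 / ln (1 + c/t)" using t0 c by (simp add: ln_div)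
qed

lemma hh_pos:
  fixes c t :: real assumes "c > 0" "t > 0"
  shows "1 / ln (1 + c/t) > 0"
proof -
  have "c/t > 0" using assms by simp
  then show ?thesis by (simp add: ln_gt_zero)
qed

lemma hh_mono:
  fixes c t1 t2 :: real assumes c: "c > 0" and t: "0 < t1" "t1 \<le> t2"
  shows "1 / ln (1 + c/t1) \<le> 1 / ln (1 + c/t2)"
proof -
  have "c/t2 \<le> c/t1" using c t by (simp add: frac_le)
  moreover have p: "c/t2 > 0" using c t by simp
  ultimately have "ln (1 + c/t2) \<le> ln (1 + c/t1)" by (subst ln_le_cancel_iff) auto
  moreover have "ln (1 + c/t2) > 0" using p by (simp add: ln_gt_zero)
  ultimately show ?thesis by (meson divide_left_mono less_le_trans mult_pos_pos zero_le_one)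
qed

lemma convex_orthant: "convex (nonneg_orthant :: (real^'m) set)"
  unfolding convex_def nonneg_orthant_def by auto

lemma load_props:
  fixes d :: "'n::finite \<Rightarrow> real"
    and x :: "'m::finite \<Rightarrow> 'n \<Rightarrow> bool"
    and g :: "'m \<Rightarrow> 'n \<Rightarrow> real"
    and P :: "'m \<Rightarrow> real"
    and \<sigma>2 K B \<eta> :: real
  assumes d_pos: "\<And>j. d j > 0"
    and x_cover: "\<And>i. \<exists>j. x i j"
    and g_nonneg: "\<And>i j. g i j \<ge> 0"
    and g_pos: "\<And>i j. x i j \<Longrightarrow> g i j > 0"
    and P_pos: "\<And>i. P i > 0"
    and \<sigma>2_pos: "\<sigma>2 > 0"
    and K_pos: "K > 0" and B_pos: "B > 0" and \<eta>_pos: "\<eta> > 0"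
  shows "concave_on nonneg_orthant (load_fun d x K B P g \<eta> \<sigma>2 i) \<and>
         standard_interference_function (load_fun d x K B P g \<eta> \<sigma>2 i)"
proof -
  define S where "S j \<rho> = (\<Sum>l\<in>UNIV-{i}. P l * g l j * \<rho> $ l)" for j and \<rho> :: "real^'m"
  define c where "c j = P i * g i j / \<eta>" for j
  define a where "a j = d j * ln 2 / (K*B)" for j
  define F where "F \<rho> = (\<Sum>j\<in>{j. x i j}. a j * (1 / ln (1 + c j / (S j \<rho> + \<sigma>2))))" for \<rho>
  have c_pos: "c j > 0" if "x i j" for j using P_pos g_pos[OF that] \<eta>_pos by (simp add: c_def)
  have a_pos: "a j > 0" for j using d_pos K_pos B_pos by (simp add: a_def)
  have S_nonneg: "S j \<rho> \<ge> 0" if "\<rho> \<in> nonneg_orthant" for j \<rho>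
    using that P_pos g_nonneg unfolding S_def nonneg_orthant_def
    by (intro sum_nonneg) (simp add: less_imp_le)
  have S_lin: "S j (u *\<^sub>R y + v *\<^sub>R z) = u * S j y + v * S j z" for j u v y z
    unfolding S_def by (simp add: sum_distrib_left sum.distrib algebra_simps)
  have S_mono: "S j \<rho>2 \<le> S j \<rho>1" if "\<forall>k. \<rho>2 $ k \<le> \<rho>1 $ k" for j \<rho>1 \<rho>2
    unfolding S_def using that P_pos g_nonneg
    by (intro sum_mono mult_left_mono) (auto intro!: mult_nonneg_nonneg less_imp_le[OF P_pos])
  have term_eq: "d j / (K * omega B P g \<eta> \<sigma>2 i j \<rho>) = a j * (1 / ln (1 + c j / (S j \<rho> + \<sigma>2)))"
    if "\<rho> \<in> nonneg_orthant" "x i j" for j \<rho>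
  proof -
    have t: "S j \<rho> + \<sigma>2 > 0" using S_nonneg[OF that(1), of j] \<sigma>2_pos by simp
    have "c j / (S j \<rho> + \<sigma>2) > 0" using t c_pos[OF that(2)] by simp
    hence L: "ln (1 + c j / (S j \<rho> + \<sigma>2)) > 0" by (simp add: ln_gt_zero)
    have e: "P i * g i j / (\<eta> * (S j \<rho> + \<sigma>2)) = c j / (S j \<rho> + \<sigma>2)"
      by (simp add: c_def)
    have om: "omega B P g \<eta> \<sigma>2 i j \<rho> = B * (ln (1 + c j / (S j \<rho> + \<sigma>2)) / ln 2)"
      unfolding omega_def log_def using e by (simp add: S_def)
    show ?thesis unfolding om using L K_pos B_pos by (simp add: a_def field_simps)
  qed
  have load_eq: "load_fun d x K B P g \<eta> \<sigma>2 i \<rho> = F \<rho>" if "\<rho> \<in> nonneg_orthant" for \<rho>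
    unfolding load_fun_def F_def using term_eq[OF that] by (intro sum.cong) auto
  have F_pos: "F \<rho> > 0" if "\<rho> \<in> nonneg_orthant" for \<rho>
    unfolding F_def
  proof (rule sum_pos)
    show "finite {j. x i j}" by simp
    show "{j. x i j} \<noteq> {}" using x_cover[of i] by auto
    fix j assume "j \<in> {j. x i j}"
    then have "x i j" by simp
    have t: "S j \<rho> + \<sigma>2 > 0" using S_nonneg[OF that, of j] \<sigma>2_pos by simp
    show "a j * (1 / ln (1 + c j / (S j \<rho> + \<sigma>2))) > 0"
      using a_pos hh_pos[OF c_pos[OF \<open>x i j\<close>] t] by simp
  qed
  have F_conc: "concave_on nonneg_orthant F"
    unfolding concave_on_iff
  proof (intro conjI convex_orthant ballI allI impI)
    fix y z :: "real^'m" and u v :: real assume yz: "y \<in> nonneg_orthant" "z \<in> nonneg_orthant"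
      and uv: "0 \<le> u" "0 \<le> v" "u + v = 1"
    have "u * F y + v * F z = (\<Sum>j\<in>{j. x i j}. a j * (u * (1 / ln (1 + c j / (S j y + \<sigma>2)))
         + v * (1 / ln (1 + c j / (S j z + \<sigma>2)))))"
      unfolding F_def by (simp add: sum_distrib_left sum.distrib algebra_simps)
    also have "\<dots> \<le> F (u *\<^sub>R y + v *\<^sub>R z)"
      unfolding F_def
    proof (rule sum_mono)
      fix j assume "j \<in> {j. x i j}"
      then have cj: "c j > 0" using c_pos by simp
      have ty: "S j y + \<sigma>2 \<in> {0<..}" using S_nonneg[OF yz(1), of j] \<sigma>2_pos by simp
      have tz: "S j z + \<sigma>2 \<in> {0<..}" using S_nonneg[OF yz(2), of j] \<sigma>2_pos by simp
      have "u * (1 / ln (1 + c j / (S j y + \<sigma>2))) + v * (1 / ln (1 + c j / (S j z + \<sigma>2)))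
          \<le> 1 / ln (1 + c j / (u *\<^sub>R (S j y + \<sigma>2) + v *\<^sub>R (S j z + \<sigma>2)))"
        using hh_concave[OF cj] ty tz uv unfolding concave_on_iff by blast
      also have "u *\<^sub>R (S j y + \<sigma>2) + v *\<^sub>R (S j z + \<sigma>2) = S j (u *\<^sub>R y + v *\<^sub>R z) + \<sigma>2"
        using uv by (simp add: S_lin algebra_simps) (metis distrib_left mult.right_neutral)
      finally show "a j * (u * (1 / ln (1 + c j / (S j y + \<sigma>2))) + v * (1 / ln (1 + c j / (S j z + \<sigma>2))))
          \<le> a j * (1 / ln (1 + c j / (S j (u *\<^sub>R y + v *\<^sub>R z) + \<sigma>2)))"
        using a_pos[of j] by (intro mult_left_mono) auto
    qed
    finally show "u * F y + v * F z \<le> F (u *\<^sub>R y + v *\<^sub>R z)" .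
  qed
  have conc: "concave_on nonneg_orthant (load_fun d x K B P g \<eta> \<sigma>2 i)"
    by (rule concave_on_eq[OF F_conc]) (simp add: load_eq)
  have zero: "0 \<in> (nonneg_orthant :: (real^'m) set)" by (simp add: nonneg_orthant_def)
  have scal: "\<alpha> * F \<rho> > F (\<alpha> *\<^sub>R \<rho>)" if "\<rho> \<in> nonneg_orthant" "\<alpha> > 1" for \<rho> \<alpha>
  proof -
    have ar: "\<alpha> *\<^sub>R \<rho> \<in> nonneg_orthant" using that by (simp add: nonneg_orthant_def)
    have "(1/\<alpha>) * F (\<alpha> *\<^sub>R \<rho>) + (1 - 1/\<alpha>) * F 0 \<le> F ((1/\<alpha>) *\<^sub>R (\<alpha> *\<^sub>R \<rho>) + (1 - 1/\<alpha>) *\<^sub>R 0)"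
    proof -
      have H: "\<forall>y\<in>nonneg_orthant. \<forall>z\<in>nonneg_orthant. \<forall>u\<ge>0. \<forall>v\<ge>0. u + v = 1 \<longrightarrow> u * F y + v * F z \<le> F (u *\<^sub>R y + v *\<^sub>R z)"
        using F_conc unfolding concave_on_iff by blast
      have "1/\<alpha> \<ge> 0" "1 - 1/\<alpha> \<ge> 0" using that(2) by auto
      then show ?thesis by (intro H[rule_format, OF ar zero]) auto
    qed
    also have "(1/\<alpha>) *\<^sub>R (\<alpha> *\<^sub>R \<rho>) + (1 - 1/\<alpha>) *\<^sub>R 0 = \<rho>" using that(2) by simp
    finally have "(1/\<alpha>) * F (\<alpha> *\<^sub>R \<rho>) + (1 - 1/\<alpha>) * F 0 \<le> F \<rho>" .
    moreover have "(1 - 1/\<alpha>) * F 0 > 0" using F_pos[OF zero] that(2) by simp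
    ultimately have "(1/\<alpha>) * F (\<alpha> *\<^sub>R \<rho>) < F \<rho>" by linarith
    then show ?thesis using that(2) by (simp add: field_simps)
  qed
  have mono: "F \<rho>2 \<le> F \<rho>1" if "\<rho>2 \<in> nonneg_orthant" "\<forall>k. \<rho>2 $ k \<le> \<rho>1 $ k" for \<rho>1 \<rho>2
    unfolding F_def
  proof (rule sum_mono)
    fix j assume "j \<in> {j. x i j}"
    then have cj: "c j > 0" using c_pos by simp
    have t: "S j \<rho>2 + \<sigma>2 > 0" using S_nonneg[OF that(1), of j] \<sigma>2_pos by simp
    show "a j * (1 / ln (1 + c j / (S j \<rho>2 + \<sigma>2))) \<le> a j * (1 / ln (1 + c j / (S j \<rho>1 + \<sigma>2)))"
      using hh_mono[OF cj t] S_mono[OF that(2), of j] a_pos[of j]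
      by (intro mult_left_mono) auto
  qed
  have "standard_interference_function (load_fun d x K B P g \<eta> \<sigma>2 i)"
    unfolding standard_interference_function_def
  proof (intro conjI ballI allI impI)
    fix \<rho> :: "real^'m" assume "\<rho> \<in> nonneg_orthant"
    then show "load_fun d x K B P g \<eta> \<sigma>2 i \<rho> > 0" using F_pos load_eq by simp
  next
    fix \<rho> :: "real^'m" and \<alpha> :: real assume "\<rho> \<in> nonneg_orthant" "\<alpha> > 1"
    moreover have "\<alpha> *\<^sub>R \<rho> \<in> nonneg_orthant" using calculation by (simp add: nonneg_orthant_def)
    ultimately show "\<alpha> * load_fun d x K B P g \<eta> \<sigma>2 i \<rho> > load_fun d x K B P g \<eta> \<sigma>2 i (\<alpha> *\<^sub>R \<rho>)"
      using scal load_eq by simp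
  next
    fix \<rho>1 \<rho>2 :: "real^'m" assume "\<rho>1 \<in> nonneg_orthant" "\<rho>2 \<in> nonneg_orthant" "\<forall>k. \<rho>2 $ k \<le> \<rho>1 $ k"
    then show "load_fun d x K B P g \<eta> \<sigma>2 i \<rho>1 \<ge> load_fun d x K B P g \<eta> \<sigma>2 i \<rho>2"
      using mono load_eq by simp
  qed
  with conc show ?thesis by blast
qed

theorem mainTheorem2:
  fixes d :: "'n::finite \<Rightarrow> real"
    and x :: "'m::finite \<Rightarrow> 'n \<Rightarrow> bool"
    and g :: "'m \<Rightarrow> 'n \<Rightarrow> real"
    and P :: "'m \<Rightarrow> real"
    and \<sigma>2 K B \<eta> :: real
  assumes d_pos: "\<And>j. d j > 0"
    and x_cover: "\<And>i. \<exists>j. x i j"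
    and g_nonneg: "\<And>i j. g i j \<ge> 0"
    and g_pos: "\<And>i j. x i j \<Longrightarrow> g i j > 0"
    and P_pos: "\<And>i. P i > 0"
    and \<sigma>2_pos: "\<sigma>2 > 0"
    and K_pos: "K > 0" and B_pos: "B > 0" and \<eta>_pos: "\<eta> > 0"
  shows "(\<forall>i. concave_on nonneg_orthant (load_fun d x K B P g \<eta> \<sigma>2 i) \<and>
              standard_interference_function (load_fun d x K B P g \<eta> \<sigma>2 i)) \<and>
         standard_interference_mapping (\<lambda>\<rho>. \<chi> i. load_fun d x K B P g \<eta> \<sigma>2 i \<rho>)"
proof -
  have A: "\<forall>i. concave_on nonneg_orthant (load_fun d x K B P g \<eta> \<sigma>2 i) \<and>
              standard_interference_function (load_fun d x K B P g \<eta> \<sigma>2 i)"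
  proof
    fix i show "concave_on nonneg_orthant (load_fun d x K B P g \<eta> \<sigma>2 i) \<and>
              standard_interference_function (load_fun d x K B P g \<eta> \<sigma>2 i)"
      by (rule load_props)
        (use assms in auto)
  qed
  then show ?thesis unfolding standard_interference_mapping_def by simp
qed
end
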